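(* Any sequential MTTKRP algorithm, executed in the two-level memory model with fast memory of size $M$, performs at least \[ \frac{1}{3^{2-1/N}}\,\frac{N I R}{M^{1-1/N}} - M \] loads and stores.
   Context: MTTKRP: Fix integers $N\ge 2$, $I_1,\dots,I_N\ge1$, $R\ge1$, and a mode $n\in[N]$; let $I=I_1I_2\cdots I_N$. Values come from an arbitrary nonempty set equipped with two binary operations written $+$ and $\cdot$ (no algebraic laws assumed). Inputs are an $N$-way tensor $\mathcal{X}$ of dimensions $I_1\times\cdots\times I_N$ and matrices $A^{(k)}$ of size $I_k\times R$ for $k\in[N]\setminus\{n\}$; the output is the $I_n\times R$ matrix $B^{(n)}$ with $B^{(n)}(i_n,r)=\sum \mathcal{X}(i_1,\dots,i_N)\prod_{k\ne n}A^{(k)}(i_k,r)$, the sum over all $(i_1,\dots,i_N)$ with $n$-th entry $i_n$. An MTTKRP algorithm must, for each point $(i_1,\dots,i_N,r)$ of the iteration space $[I_1]\times\cdots\times[I_N]\times[R]$ (of size $IR$), perform one atomic $N$-ary multiply of $\mathcal{X}(i_1,\dots,i_N)$ and the $A^{(k)}(i_k,r)$, $k\neq n$, and accumulate these products into $B^{(n)}(i_n,r)$ by binary additions. Sequential model: one processor, a fast memory holding at most $M$ values and an unbounded slow memory; arithmetic operands and results must reside in fast memory; communication consists of loads (copy a value from slow to fast memory) and stores (fast to slow); inputs start and outputs end in slow memory. *)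

theory Defs
  imports Complex_Main "HOL-Library.Multiset"
begin

text \<open>Symbolic values: since no algebraic laws hold, an algorithm that is correct for
every value set with two operations must compute the corresponding formal terms.
Indices are 0-based; the tensor has order N = length dims, modes 0..N-1.\<close>

datatype inp = XIn "nat list"
             | AIn nat nat nat           \<comment> \<open>AIn k i r = A^(k)(i,r)\<close>

datatype val = Inp inp | Mul "val list" | Add val val

datatype instr = Load val | Store val | Discard val
               | MulOp "val list" | AddOp val val

definition valid_idx :: "nat list \<Rightarrow> nat list \<Rightarrow> bool" where
  "valid_idx dims idx \<longleftrightarrow> length idx = length dims \<and> (\<forall>k<length dims. idx ! k < dims ! k)"

definition inputs :: "nat list \<Rightarrow> nat \<Rightarrow> nat \<Rightarrow> val set" where
  "inputs dims n R =
     {Inp (XIn idx) | idx. valid_idx dims idx} \<union>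
     {Inp (AIn k i r) | k i r. k < length dims \<and> k \<noteq> n \<and> i < dims ! k \<and> r < R}"

definition prod_args :: "nat list \<Rightarrow> nat \<Rightarrow> nat list \<Rightarrow> nat \<Rightarrow> val list" where
  "prod_args dims n idx r =
     Inp (XIn idx) # map (\<lambda>k. Inp (AIn k (idx ! k) r)) (filter (\<lambda>k. k \<noteq> n) [0..<length dims])"

definition products :: "nat list \<Rightarrow> nat \<Rightarrow> nat \<Rightarrow> nat \<Rightarrow> val set" where
  "products dims n i r = {Mul (prod_args dims n idx r) | idx. valid_idx dims idx \<and> idx ! n = i}"

fun leaves :: "val \<Rightarrow> val multiset" where
  "leaves (Add a b) = leaves a + leaves b"
| "leaves t = {#t#}"

text \<open>Two-level memory: state = (slow memory contents, fast memory contents);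
fast memory holds at most M values; operands and result of an arithmetic
operation must be in fast memory.\<close>
fun step :: "nat \<Rightarrow> instr \<Rightarrow> val set \<times> val set \<Rightarrow> (val set \<times> val set) option" where
  "step M (Load t) (S, F) =
     (if t \<in> S \<and> card (insert t F) \<le> M then Some (S, insert t F) else None)"
| "step M (Store t) (S, F) = (if t \<in> F then Some (insert t S, F) else None)"
| "step M (Discard t) (S, F) = Some (S, F - {t})"
| "step M (MulOp ts) (S, F) =
     (if set ts \<subseteq> F \<and> card (insert (Mul ts) F) \<le> M then Some (S, insert (Mul ts) F) else None)"
| "step M (AddOp a b) (S, F) =
     (if a \<in> F \<and> b \<in> F \<and> card (insert (Add a b) F) \<le> M then Some (S, insert (Add a b) F) else None)"

fun exec :: "nat \<Rightarrow> instr list \<Rightarrow> val set \<times> val set \<Rightarrow> (val set \<times> val set) option" where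
  "exec M [] s = Some s"
| "exec M (i # is) s = (case step M i s of None \<Rightarrow> None | Some s' \<Rightarrow> exec M is s')"

fun is_io :: "instr \<Rightarrow> bool" where
  "is_io (Load _) = True"
| "is_io (Store _) = True"
| "is_io _ = False"

definition io_count :: "instr list \<Rightarrow> nat" where
  "io_count prog = length (filter is_io prog)"

text \<open>A sequential MTTKRP algorithm (straight-line program) for mode n: runs from
inputs in slow memory with empty fast memory, performs each iteration-space multiply
exactly once, and ends with every output entry B(i,r) in slow memory as a binary
addition tree whose leaves are exactly the products of its fibre.\<close>
definition mttkrp_alg :: "nat list \<Rightarrow> nat \<Rightarrow> nat \<Rightarrow> nat \<Rightarrow> instr list \<Rightarrow> bool" where
  "mttkrp_alg dims n R M prog \<longleftrightarrow>
     (\<exists>S F. exec M prog (inputs dims n R, {}) = Some (S, F) \<and>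
        (\<forall>idx r. valid_idx dims idx \<and> r < R \<longrightarrow>
            length (filter (\<lambda>x. x = MulOp (prod_args dims n idx r)) prog) = 1) \<and>
        (\<forall>i r. i < dims ! n \<and> r < R \<longrightarrow>
            (\<exists>t\<in>S. leaves t = mset_set (products dims n i r))))"

end

theory Submission
  imports Defs "HOL-Analysis.Analysis"
begin


lemma card_fibers:
  assumes "finite T"
  shows "card T = (\<Sum>b\<in>snd ` T. card {a. (a,b) \<in> T})"
proof -
  have e: "T = (\<lambda>(b, a). (a, b)) ` (SIGMA b:snd ` T. {a. (a,b) \<in> T})"
  proof (intro equalityI subsetI)
    fix x assume "x \<in> T"
    then show "x \<in> (\<lambda>(b, a). (a, b)) ` (SIGMA b:snd ` T. {a. (a,b) \<in> T})"
      by (cases x) (auto intro!: image_eqI[where x = "(snd x, fst x)"])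
  qed auto
  have inj: "inj_on (\<lambda>(b, a). (a, b)) (SIGMA b:snd ` T. {a. (a,b) \<in> T})"
    by (auto simp: inj_on_def)
  have fin: "finite {a. (a, b) \<in> T}" for b
  proof -
    have "{a. (a, b) \<in> T} \<subseteq> fst ` T" by (auto intro: image_eqI[where x = "(_, b)"])
    then show ?thesis using assms finite_subset by blast
  qed
  have "card T = card (SIGMA b:snd ` T. {a. (a,b) \<in> T})"
    by (subst e) (rule card_image[OF inj])
  also have "\<dots> = (\<Sum>b\<in>snd ` T. card {a. (a,b) \<in> T})"
    using assms fin by (simp add: card_SigmaI)
  finally show ?thesis .
qed

lemma card_lists_le:
  assumes "\<And>k. k < N \<Longrightarrow> finite (P k)"
    and "S \<subseteq> {xs. length xs = N \<and> (\<forall>k<N. xs ! k \<in> P k)}"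
  shows "card S \<le> (\<Prod>k<N. card (P k))"
proof -
  let ?f = "\<lambda>xs. \<lambda>k\<in>{..<N}. xs ! k"
  have inj: "inj_on ?f S"
  proof
    fix xs ys assume "xs \<in> S" "ys \<in> S" "?f xs = ?f ys"
    then have L: "length xs = N" "length ys = N" using assms(2) by auto
    show "xs = ys"
    proof (rule nth_equalityI)
      show "length xs = length ys" using L by simp
      fix i assume "i < length xs"
      then have "?f xs i = ?f ys i" using \<open>?f xs = ?f ys\<close> by simp
      then show "xs ! i = ys ! i" using \<open>i < length xs\<close> L by simp
    qed
  qed
  have sub: "?f ` S \<subseteq> PiE {..<N} P"
  proof
    fix y assume "y \<in> ?f ` S"
    then obtain xs where "xs \<in> S" "y = ?f xs" by blast
    then show "y \<in> PiE {..<N} P" using assms(2) restrict_PiE_iff[of "(!) xs" "{..<N}" P] by auto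
  qed
  have "card S = card (?f ` S)" using inj by (simp add: card_image)
  also have "\<dots> \<le> card (PiE {..<N} P)"
    by (rule card_mono[OF _ sub]) (rule finite_PiE, auto simp: assms(1))
  also have "\<dots> = (\<Prod>k<N. card (P k))" by (simp add: card_PiE)
  finally show ?thesis .
qed

lemma comb_bound:
  fixes Q :: "(nat list \<times> nat) set" and N :: nat
  assumes fin: "finite Q" and len: "\<And>q. q \<in> Q \<Longrightarrow> length (fst q) = N" and N: "N \<ge> 1"
  shows "real (card Q) \<le> real (card (fst ` Q)) powr (1 - 1 / real N) *
            (\<Sum>k<N. real (card ((\<lambda>q. (fst q ! k, snd q)) ` Q))) / real N"
proof -
  define Rs where "Rs = snd ` Q"
  define S where "S r = {idx. (idx, r) \<in> Q}" for r
  define pj where "pj k = (\<lambda>q::nat list \<times> nat. (fst q ! k, snd q))" for k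
  define P where "P k r = {i. (i, r) \<in> pj k ` Q}" for k r
  define x where "x = card (fst ` Q)"
  define th where "th = 1 / real N"
  have finRs: "finite Rs" using fin by (simp add: Rs_def)
  have cQ: "card Q = (\<Sum>r\<in>Rs. card (S r))"
    using card_fibers[OF fin] by (simp add: Rs_def S_def)
  have cP: "card (pj k ` Q) = (\<Sum>r\<in>Rs. card (P k r))" for k
  proof -
    have "snd ` (pj k ` Q) = Rs" by (force simp: Rs_def pj_def image_iff)
    then show ?thesis using card_fibers[of "pj k ` Q"] fin by (simp add: P_def)
  qed
  have finP: "finite (P k r)" for k r
  proof -
    have "P k r \<subseteq> fst ` (pj k ` Q)" unfolding P_def by (metis (mono_tags, lifting) fst_conv image_eqI mem_Collect_eq subsetI)
    then show ?thesis using fin finite_subset by blast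
  qed
  have per_r: "real (card (S r)) \<le> real x powr (1 - th) * ((\<Sum>k<N. real (card (P k r))) / real N)"
    if r: "r \<in> Rs" for r
  proof -
    have finS: "finite (S r)"
    proof -
      have "S r \<subseteq> fst ` Q" by (force simp: S_def)
      then show ?thesis using fin finite_subset by blast
    qed
    have ne: "S r \<noteq> {}" using r by (auto simp: Rs_def S_def)
    have s1: "card (S r) \<ge> 1" using finS ne by (simp add: Suc_le_eq card_gt_0_iff)
    have sx: "card (S r) \<le> x"
    proof -
      have "S r \<subseteq> fst ` Q" by (force simp: S_def)
      then show ?thesis unfolding x_def using fin by (simp add: card_mono)
    qed
    have sP: "card (S r) \<le> (\<Prod>k<N. card (P k r))"
    proof (rule card_lists_le)
      show "finite (P k r)" for k by (rule finP)
      show "S r \<subseteq> {xs. length xs = N \<and> (\<forall>k<N. xs ! k \<in> P k r)}"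
      proof
        fix xs assume "xs \<in> S r"
        then have "(xs, r) \<in> Q" by (simp add: S_def)
        then show "xs \<in> {xs. length xs = N \<and> (\<forall>k<N. xs ! k \<in> P k r)}"
          using len[of "(xs,r)"] by (force simp: P_def pj_def image_iff)
      qed
    qed
    have th01: "0 \<le> th" "th \<le> 1" using N by (auto simp: th_def)
    let ?s = "real (card (S r))"
    let ?p = "real (\<Prod>k<N. card (P k r))"
    have "?s = ?s powr (1 - th) * ?s powr th"
      using s1 by (simp add: powr_add[symmetric])
    also have "\<dots> \<le> real x powr (1 - th) * ?p powr th"
    proof (rule mult_mono)
      show "?s powr (1 - th) \<le> real x powr (1 - th)" using sx th01 by (intro powr_mono2) auto
      have "?s \<le> ?p" using sP by (simp only: of_nat_le_iff)
      then show "?s powr th \<le> ?p powr th" using th01 by (intro powr_mono2) auto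
    qed auto
    also have "?p powr th \<le> (\<Sum>k<N. real (card (P k r))) / real N"
    proof -
      have "(\<Prod>k<N. real (card (P k r))) powr (1 / real (card {..<N}))
            \<le> (\<Sum>k<N. real (card (P k r)) / real (card {..<N}))"
        by (rule arith_geom_mean) (use N in \<open>auto simp: lessThan_empty_iff\<close>)
      then show ?thesis by (simp add: th_def sum_divide_distrib)
    qed
    then have "real x powr (1 - th) * ?p powr th
        \<le> real x powr (1 - th) * ((\<Sum>k<N. real (card (P k r))) / real N)"
      by (rule mult_left_mono) simp
    finally show ?thesis .
  qed
  have "real (card Q) = (\<Sum>r\<in>Rs. real (card (S r)))" by (simp add: cQ)
  also have "\<dots> \<le> (\<Sum>r\<in>Rs. real x powr (1 - th) * ((\<Sum>k<N. real (card (P k r))) / real N))"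
    by (rule sum_mono) (rule per_r)
  also have "\<dots> = real x powr (1 - th) * (\<Sum>k<N. (\<Sum>r\<in>Rs. real (card (P k r)))) / real N"
    by (simp add: sum_distrib_left sum_divide_distrib[symmetric] sum.swap[of _ Rs])
  also have "\<dots> = real x powr (1 - th) * (\<Sum>k<N. real (card (pj k ` Q))) / real N"
    by (simp add: cP)
  finally show ?thesis by (simp add: x_def th_def pj_def)
qed




lemma exec_append:
  "exec M (xs @ ys) s = (case exec M xs s of None \<Rightarrow> None | Some s' \<Rightarrow> exec M ys s')"
  by (induction xs arbitrary: s) (auto split: option.splits)

lemma step_cases:
  assumes "step M i (S, F) = Some (S', F')"
  shows "(\<exists>t. i = Load t \<and> t \<in> S \<and> S' = S \<and> F' = insert t F \<and> card F' \<le> M)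
       \<or> (\<exists>t. i = Store t \<and> t \<in> F \<and> S' = insert t S \<and> F' = F)
       \<or> (\<exists>t. i = Discard t \<and> S' = S \<and> F' = F - {t})
       \<or> (\<exists>ts. i = MulOp ts \<and> set ts \<subseteq> F \<and> S' = S \<and> F' = insert (Mul ts) F \<and> card F' \<le> M)
       \<or> (\<exists>a b. i = AddOp a b \<and> a \<in> F \<and> b \<in> F \<and> S' = S \<and> F' = insert (Add a b) F \<and> card F' \<le> M)"
  using assms by (cases i) (auto split: if_splits)

fun subs :: "val \<Rightarrow> val set" where
  "subs (Add a b) = insert (Add a b) (subs a \<union> subs b)"
| "subs v = {v}"

lemma subs_self: "t \<in> subs t"
  by (cases t) auto

lemma subs_trans: "v \<in> subs t \<Longrightarrow> u \<in> subs v \<Longrightarrow> u \<in> subs t"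
  by (induction t) auto

lemma subs_Add: "Add a b \<in> subs t \<Longrightarrow> a \<in> subs t \<and> b \<in> subs t"
  using subs_trans[of "Add a b" t] subs_self by auto

lemma leaves_subs: "v \<in> subs t \<Longrightarrow> set_mset (leaves v) \<subseteq> set_mset (leaves t)"
  by (induction t) auto

lemma leaves_ne: "leaves v \<noteq> {#}"
  by (induction v rule: leaves.induct) auto


lemma valid_idx_Nil: "valid_idx [] xs \<longleftrightarrow> xs = []"
  by (simp add: valid_idx_def)

lemma valid_idx_Cons: "valid_idx (d # ds) xs \<longleftrightarrow> (\<exists>x ys. xs = x # ys \<and> x < d \<and> valid_idx ds ys)"
proof
  assume "valid_idx (d # ds) xs"
  then show "\<exists>x ys. xs = x # ys \<and> x < d \<and> valid_idx ds ys"
  proof (cases xs)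
    case Nil then show ?thesis using \<open>valid_idx (d # ds) xs\<close> by (simp add: valid_idx_def)
  next
    case (Cons x ys)
    have "x < d" using \<open>valid_idx (d # ds) xs\<close> Cons unfolding valid_idx_def by fastforce
    moreover have "valid_idx ds ys" unfolding valid_idx_def
    proof (intro conjI allI impI)
      show "length ys = length ds" using \<open>valid_idx (d # ds) xs\<close> Cons by (simp add: valid_idx_def)
      fix k assume "k < length ds"
      then have "Suc k < length (d # ds)" by simp
      then have "xs ! Suc k < (d # ds) ! Suc k" using \<open>valid_idx (d # ds) xs\<close> unfolding valid_idx_def by blast
      then show "ys ! k < ds ! k" using Cons by simp
    qed
    ultimately show ?thesis using Cons by blast
  qed
next
  assume "\<exists>x ys. xs = x # ys \<and> x < d \<and> valid_idx ds ys"
  then show "valid_idx (d # ds) xs"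
    unfolding valid_idx_def by (auto simp: nth_Cons split: nat.splits)
qed

lemma valid_set_Cons:
  "{xs. valid_idx (d # ds) xs} = (\<lambda>(x, ys). x # ys) ` ({..<d} \<times> {ys. valid_idx ds ys})"
  by (auto simp: valid_idx_Cons image_iff)

lemma valid_finite_card:
  "finite {xs. valid_idx dims xs} \<and> card {xs. valid_idx dims xs} = prod_list dims"
proof (induction dims)
  case Nil
  then show ?case by (simp add: valid_idx_Nil)
next
  case (Cons d ds)
  have inj: "inj_on (\<lambda>(x, ys). x # ys) ({..<d} \<times> {ys. valid_idx ds ys})"
    by (auto simp: inj_on_def)
  show ?case unfolding valid_set_Cons using Cons
    by (simp add: card_image[OF inj] card_cartesian_product)
qed

lemma prod_args_inj:
  assumes "length dims \<ge> 2" "n < length dims"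
    and "prod_args dims n idx r = prod_args dims n idx' r'"
  shows "idx = idx' \<and> r = r'"
proof -
  define k0 :: nat where "k0 = (if n = 0 then 1 else 0)"
  have k0: "k0 < length dims" "k0 \<noteq> n" using assms(1) by (auto simp: k0_def)
  have "Inp (AIn k0 (idx ! k0) r) \<in> set (prod_args dims n idx r)"
    using k0 by (auto simp: prod_args_def)
  then have "Inp (AIn k0 (idx ! k0) r) \<in> set (prod_args dims n idx' r')"
    using assms(3) by simp
  then have "r = r'" by (auto simp: prod_args_def)
  moreover have "idx = idx'" using assms(3) by (simp add: prod_args_def)
  ultimately show ?thesis by simp
qed




locale mtt =
  fixes dims :: "nat list" and n R M :: nat and prog :: "instr list"
  assumes N2: "length dims \<ge> 2" and nN: "n < length dims"
    and alg: "mttkrp_alg dims n R M prog"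
begin

definition "s0 = (inputs dims n R, {})"
definition "st j = the (exec M (take j prog) s0)"
definition "SS j = fst (st j)"
definition "FF j = snd (st j)"

lemma exec_ok: "exec M prog s0 \<noteq> None"
  using alg by (auto simp: mttkrp_alg_def s0_def)

lemma exec_take: "j \<le> length prog \<Longrightarrow> exec M (take j prog) s0 = Some (st j)"
proof -
  assume "j \<le> length prog"
  have e: "exec M prog s0 = (case exec M (take j prog) s0 of None \<Rightarrow> None | Some s' \<Rightarrow> exec M (drop j prog) s')"
    using exec_append[of M "take j prog" "drop j prog" s0] by simp
  have "exec M (take j prog) s0 \<noteq> None"
  proof
    assume "exec M (take j prog) s0 = None"
    then have "exec M prog s0 = None" using e by simp
    then show False using exec_ok by simp
  qed
  then show ?thesis by (auto simp: st_def)
qed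

lemma st_step: "j < length prog \<Longrightarrow> step M (prog ! j) (SS j, FF j) = Some (SS (Suc j), FF (Suc j))"
proof -
  assume j: "j < length prog"
  have "exec M (take (Suc j) prog) s0 = exec M (take j prog @ [prog ! j]) s0"
    using j by (simp add: take_Suc_conv_app_nth)
  then have "Some (st (Suc j)) = (case step M (prog ! j) (st j) of None \<Rightarrow> None | Some s' \<Rightarrow> exec M [] s')"
    using exec_take[of "Suc j"] exec_take[of j] j by (simp add: exec_append)
  then have "Some (st (Suc j)) = step M (prog ! j) (st j)"
    by (cases "step M (prog ! j) (st j)") auto
  then show ?thesis by (simp add: SS_def FF_def)
qed

lemma st0: "SS 0 = inputs dims n R" "FF 0 = {}"
proof -
  have "st 0 = s0" by (simp add: st_def)
  then show "SS 0 = inputs dims n R" "FF 0 = {}" by (auto simp: SS_def FF_def s0_def)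
qed

lemma st_final: "exec M prog s0 = Some (SS (length prog), FF (length prog))"
  using exec_take[of "length prog"] by (simp add: SS_def FF_def)

lemma cases_at:
  assumes "j < length prog"
  shows "(\<exists>t. prog ! j = Load t \<and> t \<in> SS j \<and> SS (Suc j) = SS j \<and> FF (Suc j) = insert t (FF j) \<and> card (FF (Suc j)) \<le> M)
       \<or> (\<exists>t. prog ! j = Store t \<and> t \<in> FF j \<and> SS (Suc j) = insert t (SS j) \<and> FF (Suc j) = FF j)
       \<or> (\<exists>t. prog ! j = Discard t \<and> SS (Suc j) = SS j \<and> FF (Suc j) = FF j - {t})
       \<or> (\<exists>ts. prog ! j = MulOp ts \<and> set ts \<subseteq> FF j \<and> SS (Suc j) = SS j \<and> FF (Suc j) = insert (Mul ts) (FF j) \<and> card (FF (Suc j)) \<le> M)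
       \<or> (\<exists>a b. prog ! j = AddOp a b \<and> a \<in> FF j \<and> b \<in> FF j \<and> SS (Suc j) = SS j \<and> FF (Suc j) = insert (Add a b) (FF j) \<and> card (FF (Suc j)) \<le> M)"
  by (rule step_cases[OF st_step[OF assms]])

lemma FF_inv: "j \<le> length prog \<Longrightarrow> finite (FF j) \<and> card (FF j) \<le> M"
proof (induction j)
  case 0 then show ?case by (simp add: st0)
next
  case (Suc j)
  then have IH: "finite (FF j)" "card (FF j) \<le> M" and j: "j < length prog" by auto
  from cases_at[OF j] show ?case
  proof (elim disjE exE conjE)
    fix t assume "FF (Suc j) = FF j - {t}"
    then show ?thesis using IH by (simp add: card_Diff1_le le_trans[OF card_Diff1_le])
  qed (use IH in auto)
qed

lemma leaf_inv:
  "j \<le> length prog \<Longrightarrow> v \<in> SS j \<union> FF j \<Longrightarrow> Mul ts \<in># leaves v \<Longrightarrow> \<exists>j'<j. prog ! j' = MulOp ts"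
proof (induction j arbitrary: v)
  case 0
  then show ?case by (auto simp: st0 inputs_def)
next
  case (Suc j)
  then have j: "j < length prog" by simp
  have IH: "\<And>v. v \<in> SS j \<union> FF j \<Longrightarrow> Mul ts \<in># leaves v \<Longrightarrow> \<exists>j'<Suc j. prog ! j' = MulOp ts"
    using Suc.IH j by (meson less_SucI less_imp_le)
  from cases_at[OF j] show ?case
  proof (elim disjE exE conjE)
    fix ts' assume "prog ! j = MulOp ts'" "FF (Suc j) = insert (Mul ts') (FF j)" "SS (Suc j) = SS j"
    then show ?thesis using Suc.prems IH by (cases "v = Mul ts'") auto
  next
    fix a b assume "prog ! j = AddOp a b" "a \<in> FF j" "b \<in> FF j"
      "FF (Suc j) = insert (Add a b) (FF j)" "SS (Suc j) = SS j"
    then show ?thesis using Suc.prems IH by (cases "v = Add a b") auto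
  qed (use Suc.prems IH in auto)
qed

lemma input_inv:
  assumes "a \<le> j" "j \<le> length prog" "v \<in> FF j" "v = Inp x"
  shows "v \<in> FF a \<or> (\<exists>j'. a \<le> j' \<and> j' < j \<and> prog ! j' = Load v)"
proof -
  obtain d where jd: "j = a + d" using assms(1) le_Suc_ex by blast
  have "a + d \<le> length prog \<Longrightarrow> v \<in> FF (a + d) \<Longrightarrow> v \<in> FF a \<or> (\<exists>j'. a \<le> j' \<and> j' < a + d \<and> prog ! j' = Load v)"
  proof (induction d)
    case 0 then show ?case by simp
  next
    case (Suc d)
    then have j: "a + d < length prog" by simp
    have IH: "v \<in> FF (a + d) \<Longrightarrow> v \<in> FF a \<or> (\<exists>j'. a \<le> j' \<and> j' < a + Suc d \<and> prog ! j' = Load v)"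
      using Suc.IH j by fastforce
    from cases_at[OF j] show ?case
    proof (elim disjE exE conjE)
      fix t assume "prog ! (a + d) = Load t" "FF (Suc (a + d)) = insert t (FF (a + d))"
      then show ?thesis using Suc.prems IH by (cases "v = t") auto
    qed (use Suc.prems IH assms(4) in auto)
  qed
  then show ?thesis using assms jd by simp
qed

lemma store_inv:
  assumes "a \<le> j" "j \<le> length prog" "v \<in> SS j"
  shows "v \<in> SS a \<or> (\<exists>j'. a \<le> j' \<and> j' < j \<and> prog ! j' = Store v)"
proof -
  obtain d where jd: "j = a + d" using assms(1) le_Suc_ex by blast
  have "a + d \<le> length prog \<Longrightarrow> v \<in> SS (a + d) \<Longrightarrow> v \<in> SS a \<or> (\<exists>j'. a \<le> j' \<and> j' < a + d \<and> prog ! j' = Store v)"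
  proof (induction d)
    case 0 then show ?case by simp
  next
    case (Suc d)
    then have j: "a + d < length prog" by simp
    have IH: "v \<in> SS (a + d) \<Longrightarrow> v \<in> SS a \<or> (\<exists>j'. a \<le> j' \<and> j' < a + Suc d \<and> prog ! j' = Store v)"
      using Suc.IH j by fastforce
    from cases_at[OF j] show ?case
    proof (elim disjE exE conjE)
      fix t assume "prog ! (a + d) = Store t" "SS (Suc (a + d)) = insert t (SS (a + d))"
      then show ?thesis using Suc.prems IH by (cases "v = t") auto
    qed (use Suc.prems IH in auto)
  qed
  then show ?thesis using assms jd by simp
qed

end



context mtt begin

definition "pts = {q. valid_idx dims (fst q) \<and> snd q < R}"
definition "pa q = prod_args dims n (fst q) (snd q)"
definition "tau q = (THE j. j < length prog \<and> prog ! j = MulOp (pa q))"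
definition "tf f = (SOME t. t \<in> SS (length prog) \<and> leaves t = mset_set (products dims n (fst f) (snd f)))"

lemma pts_eq: "pts = {idx. valid_idx dims idx} \<times> {..<R}"
  by (auto simp: pts_def)

lemma finite_pts: "finite pts" and card_pts: "card pts = prod_list dims * R"
  using valid_finite_card[of dims] by (auto simp: pts_eq card_cartesian_product)

lemma tau:
  assumes "q \<in> pts"
  shows "tau q < length prog \<and> prog ! tau q = MulOp (pa q)
         \<and> (\<forall>j<length prog. prog ! j = MulOp (pa q) \<longrightarrow> j = tau q)"
proof -
  have "length (filter (\<lambda>x. x = MulOp (pa q)) prog) = 1"
    using alg assms unfolding mttkrp_alg_def pts_def pa_def by (cases q) auto
  then have "card {i. i < length prog \<and> prog ! i = MulOp (pa q)} = 1"
    by (simp add: length_filter_conv_card)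
  then obtain j where J: "{i. i < length prog \<and> prog ! i = MulOp (pa q)} = {j}"
    by (auto simp: card_Suc_eq)
  then have "tau q = j" unfolding tau_def by (rule_tac the_equality) auto
  then show ?thesis using J by auto
qed

lemma finite_products: "finite (products dims n i r)"
proof -
  have "products dims n i r \<subseteq> (\<lambda>idx. Mul (prod_args dims n idx r)) ` {idx. valid_idx dims idx}"
    by (auto simp: products_def)
  then show ?thesis using valid_finite_card[of dims] finite_subset by blast
qed

lemma tf:
  assumes "i < dims ! n" "r < R"
  shows "tf (i, r) \<in> SS (length prog) \<and> leaves (tf (i, r)) = mset_set (products dims n i r)"
proof -
  obtain S F where SF: "exec M prog s0 = Some (S, F)"
    and out: "\<forall>i r. i < dims ! n \<and> r < R \<longrightarrow> (\<exists>t\<in>S. leaves t = mset_set (products dims n i r))"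
    using alg unfolding mttkrp_alg_def s0_def by blast
  have "S = SS (length prog)" using SF st_final by simp
  then have "\<exists>t. t \<in> SS (length prog) \<and> leaves t = mset_set (products dims n i r)"
    using out assms by blast
  then show ?thesis unfolding tf_def fst_conv snd_conv by (rule someI_ex)
qed

lemma mul_step:
  assumes "j < length prog" "prog ! j = MulOp ts"
  shows "set ts \<subseteq> FF j"
  using st_step[OF assms(1)] assms(2) by (auto split: if_splits)

definition "IOV a b = {v. \<exists>j. a \<le> j \<and> j < b \<and> (prog ! j = Load v \<or> prog ! j = Store v)}"
definition "Qs a b = {q \<in> pts. a \<le> tau q \<and> tau q < b}"

lemma inputs_used:
  assumes "q \<in> Qs a b"
  shows "set (pa q) \<subseteq> FF a \<union> IOV a b"
proof
  fix v assume v: "v \<in> set (pa q)"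
  have q: "q \<in> pts" "a \<le> tau q" "tau q < b" using assms by (auto simp: Qs_def)
  have t: "tau q < length prog" "prog ! tau q = MulOp (pa q)" using tau[OF q(1)] by auto
  have vF: "v \<in> FF (tau q)" using mul_step[OF t] v by auto
  obtain x where vx: "v = Inp x" using v by (auto simp: pa_def prod_args_def)
  from input_inv[OF q(2) _ vF vx] t(1) q(3) show "v \<in> FF a \<union> IOV a b"
    by (auto simp: IOV_def)
qed

lemma pa_products:
  assumes "q \<in> pts"
  shows "Mul (pa q) \<in> products dims n (fst q ! n) (snd q)"
  using assms by (auto simp: pts_def pa_def products_def)

lemma no_leaf_after:
  assumes q: "q \<in> pts" and bj: "b \<le> j" and jL: "j \<le> length prog" and tb: "tau q < b"
    and base: "\<forall>v\<in>SS b \<union> FF b. v \<in> subs t \<longrightarrow> \<not> Mul (pa q) \<in># leaves v"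
  shows "\<forall>v\<in>SS j \<union> FF j. v \<in> subs t \<longrightarrow> \<not> Mul (pa q) \<in># leaves v"
  using bj jL
proof (induction j rule: dec_induct)
  case base
  then show ?case using assms(5) by simp
next
  case (step m)
  then have j: "m < length prog" by simp
  have IH: "\<forall>v\<in>SS m \<union> FF m. v \<in> subs t \<longrightarrow> \<not> Mul (pa q) \<in># leaves v"
    using step by simp
  have T3: "\<And>j. j < length prog \<Longrightarrow> prog ! j = MulOp (pa q) \<Longrightarrow> j = tau q"
    using tau[OF q] by blast
  show ?case
  proof (intro ballI impI)
    fix v assume v: "v \<in> SS (Suc m) \<union> FF (Suc m)" "v \<in> subs t"
    from cases_at[OF j] show "\<not> Mul (pa q) \<in># leaves v"
    proof (elim disjE exE conjE)
      fix ts assume A: "prog ! m = MulOp ts" "SS (Suc m) = SS m"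
        "FF (Suc m) = insert (Mul ts) (FF m)"
      show ?thesis
      proof (cases "v = Mul ts")
        case True
        show ?thesis
        proof
          assume "Mul (pa q) \<in># leaves v"
          then have "ts = pa q" using True by simp
          then have "m = tau q" using T3[OF j] A(1) by simp
          then show False using tb step.hyps(1) by simp
        qed
      next
        case False
        then have "v \<in> SS m \<union> FF m" using v(1) A by simp
        then show ?thesis using IH v(2) by blast
      qed
    next
      fix x y assume A: "prog ! m = AddOp x y" "x \<in> FF m" "y \<in> FF m"
        "SS (Suc m) = SS m" "FF (Suc m) = insert (Add x y) (FF m)"
      show ?thesis
      proof (cases "v = Add x y")
        case True
        have xy: "x \<in> subs t" "y \<in> subs t" using subs_Add[of x y t] v(2) True by auto
        have "\<not> Mul (pa q) \<in># leaves x" using IH A(2) xy(1) by blast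
        moreover have "\<not> Mul (pa q) \<in># leaves y" using IH A(3) xy(2) by blast
        ultimately show ?thesis using True by simp
      next
        case False
        then have "v \<in> SS m \<union> FF m" using v(1) A by simp
        then show ?thesis using IH v(2) by blast
      qed
    next
      fix u assume A: "prog ! m = Load u" "u \<in> SS m" "SS (Suc m) = SS m"
        "FF (Suc m) = insert u (FF m)"
      then have "v \<in> SS m \<union> FF m" using v(1) by auto
      then show ?thesis using IH v(2) by blast
    next
      fix u assume A: "prog ! m = Store u" "u \<in> FF m" "SS (Suc m) = insert u (SS m)"
        "FF (Suc m) = FF m"
      then have "v \<in> SS m \<union> FF m" using v(1) by auto
      then show ?thesis using IH v(2) by blast
    next
      fix u assume A: "prog ! m = Discard u" "SS (Suc m) = SS m"
        "FF (Suc m) = FF m - {u}"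
      then have "v \<in> SS m \<union> FF m" using v(1) by auto
      then show ?thesis using IH v(2) by blast
    qed
  qed
qed

lemma no_leaf_base:
  assumes q: "q \<in> Qs a b" and bL: "b \<le> length prog"
    and nw: "\<not> (\<exists>v \<in> FF b \<union> IOV a b. v \<in> subs t)"
  shows "\<forall>v\<in>SS b \<union> FF b. v \<in> subs t \<longrightarrow> \<not> Mul (pa q) \<in># leaves v"
proof (intro ballI impI notI)
  fix v assume v: "v \<in> SS b \<union> FF b" "v \<in> subs t" and pv: "Mul (pa q) \<in># leaves v"
  have qq: "q \<in> pts" "a \<le> tau q" "tau q < b" using q by (auto simp: Qs_def)
  have T: "tau q < length prog" "\<And>j. j < length prog \<Longrightarrow> prog ! j = MulOp (pa q) \<Longrightarrow> j = tau q"
    using tau[OF qq(1)] by blast+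
  have "v \<notin> FF b" using nw v(2) by blast
  then have vS: "v \<in> SS b" using v(1) by simp
  have ab: "a \<le> b" using qq by simp
  have "v \<in> SS a \<or> (\<exists>j'. a \<le> j' \<and> j' < b \<and> prog ! j' = Store v)"
    by (rule store_inv[OF ab bL vS])
  moreover have "v \<notin> IOV a b" using nw v(2) by blast
  ultimately have "v \<in> SS a" unfolding IOV_def by blast
  then have vA: "v \<in> SS a \<union> FF a" by simp
  have aL: "a \<le> length prog" using ab bL by simp
  from leaf_inv[OF aL vA pv] obtain j' where j': "j' < a" "prog ! j' = MulOp (pa q)" by blast
  have "j' < length prog" using j' aL by simp
  from T(2)[OF this j'(2)] have "j' = tau q" .
  then show False using j'(1) qq(2) by simp
qed

lemma witness:
  assumes "q \<in> Qs a b" "b \<le> length prog"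
  shows "\<exists>v \<in> FF b \<union> IOV a b. v \<in> subs (tf (fst q ! n, snd q))"
proof (rule ccontr)
  assume nw: "\<not> ?thesis"
  define t where "t = tf (fst q ! n, snd q)"
  have nw': "\<not> (\<exists>v \<in> FF b \<union> IOV a b. v \<in> subs t)" using nw by (simp add: t_def)
  have q: "q \<in> pts" "tau q < b" using assms by (auto simp: Qs_def)
  have qi: "fst q ! n < dims ! n" "snd q < R"
    using q(1) nN by (auto simp: pts_def valid_idx_def)
  have tS: "t \<in> SS (length prog)" and tl: "leaves t = mset_set (products dims n (fst q ! n) (snd q))"
    using tf[OF qi] by (auto simp: t_def)
  have pp: "Mul (pa q) \<in> products dims n (fst q ! n) (snd q)" by (rule pa_products[OF q(1)])
  have pt: "Mul (pa q) \<in># leaves t" unfolding tl using elem_mset_set[OF finite_products] pp by blast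
  have B: "\<forall>v\<in>SS b \<union> FF b. v \<in> subs t \<longrightarrow> \<not> Mul (pa q) \<in># leaves v"
    by (rule no_leaf_base[OF assms nw'])
  have "\<forall>v\<in>SS (length prog) \<union> FF (length prog). v \<in> subs t \<longrightarrow> \<not> Mul (pa q) \<in># leaves v"
    by (rule no_leaf_after[OF q(1) assms(2) order_refl q(2) B])
  then show False using tS subs_self[of t] pt by blast
qed

end



fun ioval :: "instr \<Rightarrow> val" where
  "ioval (Load v) = v"
| "ioval (Store v) = v"
| "ioval _ = Inp (XIn [])"

context mtt begin

definition "iorank j = card {i. i < j \<and> is_io (prog ! i)}"
definition "iop a b = {j. a \<le> j \<and> j < b \<and> is_io (prog ! j)}"
definition "wit a b f = (SOME v. v \<in> FF b \<union> IOV a b \<and> v \<in> subs (tf f))"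

lemma io_rank: "io_count prog = iorank (length prog)"
  by (simp add: io_count_def iorank_def length_filter_conv_card)

lemma card_iop: assumes "a \<le> b" shows "iorank b = iorank a + card (iop a b)"
proof -
  have "{i. i < b \<and> is_io (prog ! i)} = {i. i < a \<and> is_io (prog ! i)} \<union> iop a b"
    using assms by (auto simp: iop_def)
  moreover have "{i. i < a \<and> is_io (prog ! i)} \<inter> iop a b = {}" by (auto simp: iop_def)
  moreover have "finite (iop a b)" by (auto simp: iop_def)
  ultimately show ?thesis unfolding iorank_def by (simp add: card_Un_disjoint)
qed

lemma card_IOV: "card (IOV a b) \<le> card (iop a b)"
proof -
  have "IOV a b \<subseteq> (\<lambda>j. ioval (prog ! j)) ` iop a b"
    by (force simp: IOV_def iop_def image_iff)
  moreover have "finite (iop a b)" by (auto simp: iop_def)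
  ultimately show ?thesis by (meson card_image_le card_mono finite_imageI le_trans)
qed

lemma finite_IOV: "finite (IOV a b)"
proof -
  have "IOV a b \<subseteq> (\<lambda>j. ioval (prog ! j)) ` iop a b"
    by (force simp: IOV_def iop_def image_iff)
  moreover have "finite (iop a b)" by (auto simp: iop_def)
  ultimately show ?thesis by (meson finite_imageI finite_subset)
qed

lemma wit:
  assumes "q \<in> Qs a b" "b \<le> length prog"
  shows "wit a b (fst q ! n, snd q) \<in> FF b \<union> IOV a b \<and> wit a b (fst q ! n, snd q) \<in> subs (tf (fst q ! n, snd q))"
  using witness[OF assms] unfolding wit_def by (rule_tac someI_ex) blast

lemma subs_tf_leaves:
  assumes "q \<in> pts" "v \<in> subs (tf (fst q ! n, snd q))"
  shows "set_mset (leaves v) \<subseteq> products dims n (fst q ! n) (snd q)"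
proof -
  have qi: "fst q ! n < dims ! n" "snd q < R"
    using assms(1) nN by (auto simp: pts_def valid_idx_def)
  show ?thesis using leaves_subs[OF assms(2)] tf[OF qi] finite_products by simp
qed

lemma products_disj:
  assumes "e \<in> products dims n i r" "e \<in> products dims n i' r'"
  shows "i = i' \<and> r = r'"
  using assms prod_args_inj[OF N2 nN] by (auto simp: products_def)

lemma set_pa:
  "set (pa q) = {Inp (XIn (fst q))} \<union> (\<lambda>k. Inp (AIn k (fst q ! k) (snd q))) ` {k. k < length dims \<and> k \<noteq> n}"
  by (auto simp: pa_def prod_args_def)

end



context mtt begin

lemma chunk_count:
  assumes ab: "a \<le> b" "b \<le> length prog" and rk: "iorank b \<le> iorank a + M"
  defines "Q \<equiv> Qs a b"
  shows "card (fst ` Q) + (\<Sum>k<length dims. card ((\<lambda>q. (fst q ! k, snd q)) ` Q)) \<le> 3 * M"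
proof -
  define N where "N = length dims"
  define pj where "pj k = (\<lambda>q::nat list \<times> nat. (fst q ! k, snd q))" for k
  define K where "K = {k. k < N \<and> k \<noteq> n}"
  define XV where "XV = (\<lambda>idx. Inp (XIn idx)) ` (fst ` Q)"
  define AV where "AV k = (\<lambda>p. Inp (AIn k (fst p) (snd p))) ` (pj k ` Q)" for k
  define VS where "VS = (\<Union>q\<in>Q. set (pa q))"
  define W where "W = wit a b ` (pj n ` Q)"
  have finQ: "finite Q" using finite_pts by (auto simp: Q_def Qs_def)
  have finK: "finite K" by (simp add: K_def)
  have VSeq: "VS = XV \<union> (\<Union>k\<in>K. AV k)"
  proof (intro equalityI subsetI)
    fix v assume "v \<in> VS"
    then obtain q where q: "q \<in> Q" "v \<in> set (pa q)" by (auto simp: VS_def)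
    then consider "v = Inp (XIn (fst q))" | k where "k \<in> K" "v = Inp (AIn k (fst q ! k) (snd q))"
      unfolding set_pa K_def N_def by blast
    then show "v \<in> XV \<union> (\<Union>k\<in>K. AV k)"
    proof cases
      case 1
      then have "v \<in> XV" unfolding XV_def using q(1) by blast
      then show ?thesis by blast
    next
      case (2 k)
      have "(fst q ! k, snd q) \<in> pj k ` Q" unfolding pj_def using q(1) by blast
      then have "v \<in> AV k" unfolding AV_def using 2(2)
        by (intro image_eqI[where x = "(fst q ! k, snd q)"]) simp_all
      then show ?thesis using 2(1) by blast
    qed
  next
    fix v assume "v \<in> XV \<union> (\<Union>k\<in>K. AV k)"
    then consider "v \<in> XV" | k where "k \<in> K" "v \<in> AV k" by blast
    then show "v \<in> VS"
    proof cases
      case 1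
      then obtain q where q: "q \<in> Q" "v = Inp (XIn (fst q))" unfolding XV_def by blast
      then have "v \<in> set (pa q)" unfolding set_pa by blast
      then show ?thesis using q(1) unfolding VS_def by blast
    next
      case (2 k)
      then obtain q where q: "q \<in> Q" "v = Inp (AIn k (fst q ! k) (snd q))"
        unfolding AV_def pj_def by auto
      then have "v \<in> set (pa q)" unfolding set_pa using 2(1) K_def N_def by blast
      then show ?thesis using q(1) unfolding VS_def by blast
    qed
  qed
  have cXV: "card XV = card (fst ` Q)" unfolding XV_def
    by (rule card_image) (auto simp: inj_on_def)
  have cAV: "card (AV k) = card (pj k ` Q)" for k unfolding AV_def
    by (rule card_image) (auto simp: inj_on_def prod_eq_iff)
  have finAV: "finite (AV k)" for k using finQ by (simp add: AV_def)
  have cUA: "card (\<Union>k\<in>K. AV k) = (\<Sum>k\<in>K. card (AV k))"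
  proof (rule card_UN_disjoint[OF finK])
    show "\<forall>k\<in>K. finite (AV k)" using finAV by blast
    show "\<forall>i\<in>K. \<forall>j\<in>K. i \<noteq> j \<longrightarrow> AV i \<inter> AV j = {}" by (auto simp: AV_def)
  qed
  have cVS: "card VS = card (fst ` Q) + (\<Sum>k\<in>K. card (pj k ` Q))"
  proof -
    have "XV \<inter> (\<Union>k\<in>K. AV k) = {}" by (auto simp: XV_def AV_def)
    then have "card VS = card XV + card (\<Union>k\<in>K. AV k)"
      unfolding VSeq using finQ finK finAV by (subst card_Un_disjoint) (auto simp: XV_def)
    then show ?thesis using cXV cUA cAV by simp
  qed
  have Qpts: "q \<in> pts" if "q \<in> Q" for q using that by (auto simp: Q_def Qs_def)
  have injW: "inj_on (wit a b) (pj n ` Q)"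
  proof
    fix f g assume f: "f \<in> pj n ` Q" and g: "g \<in> pj n ` Q" and e: "wit a b f = wit a b g"
    obtain q where q: "q \<in> Q" "f = (fst q ! n, snd q)" using f by (auto simp: pj_def)
    obtain q' where q': "q' \<in> Q" "g = (fst q' ! n, snd q')" using g by (auto simp: pj_def)
    have w1: "wit a b f \<in> subs (tf f)" using wit[of q a b] q ab by (auto simp: Q_def)
    have w2: "wit a b f \<in> subs (tf g)" using wit[of q' a b] q' ab e by (auto simp: Q_def)
    obtain l where l: "l \<in># leaves (wit a b f)" using leaves_ne
      by (metis multiset_nonemptyE)
    have "l \<in> products dims n (fst q ! n) (snd q)" using subs_tf_leaves[OF Qpts[OF q(1)]] w1 q l by auto
    moreover have "l \<in> products dims n (fst q' ! n) (snd q')" using subs_tf_leaves[OF Qpts[OF q'(1)]] w2 q' l by auto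
    ultimately show "f = g" using products_disj q q' by auto
  qed
  have cW: "card W = card (pj n ` Q)" unfolding W_def using injW by (rule card_image)
  have disj: "VS \<inter> W = {}"
  proof (rule ccontr)
    assume "VS \<inter> W \<noteq> {}"
    then obtain v where v: "v \<in> VS" "v \<in> W" by blast
    obtain x where vx: "v = Inp x" using v(1) by (auto simp: VS_def pa_def prod_args_def)
    obtain q where q: "q \<in> Q" "v = wit a b (fst q ! n, snd q)" using v(2) by (auto simp: W_def pj_def)
    have "v \<in> subs (tf (fst q ! n, snd q))" using wit[of q a b] q ab by (auto simp: Q_def)
    then have "set_mset (leaves v) \<subseteq> products dims n (fst q ! n) (snd q)"
      by (rule subs_tf_leaves[OF Qpts[OF q(1)]])
    then have "Inp x \<in> products dims n (fst q ! n) (snd q)" using vx by simp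
    then show False by (auto simp: products_def)
  qed
  have subVS: "VS \<subseteq> FF a \<union> IOV a b"
  proof
    fix v assume "v \<in> VS"
    then obtain q where "q \<in> Qs a b" "v \<in> set (pa q)" by (auto simp: VS_def Q_def)
    then show "v \<in> FF a \<union> IOV a b" using inputs_used[of q a b] by blast
  qed
  have subW: "W \<subseteq> FF b \<union> IOV a b" using wit ab by (auto simp: W_def Q_def pj_def)
  have finF: "finite (FF a)" "card (FF a) \<le> M" "finite (FF b)" "card (FF b) \<le> M"
    using FF_inv[of a] FF_inv[of b] ab by auto
  have "card VS + card W = card (VS \<union> W)"
    using disj finF finite_IOV subVS subW
    by (subst card_Un_disjoint) (auto intro: finite_subset)
  also have "\<dots> \<le> card (FF a \<union> FF b \<union> IOV a b)"
    using subVS subW finF finite_IOV by (intro card_mono) auto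
  also have "\<dots> \<le> card (FF a) + card (FF b) + card (IOV a b)"
    by (meson card_Un_le le_trans add_le_mono order_refl)
  also have "\<dots> \<le> M + M + card (iop a b)" using finF card_IOV[of a b] by simp
  also have "\<dots> \<le> 3 * M" using card_iop[OF ab(1)] rk by simp
  finally have tot: "card VS + card W \<le> 3 * M" .
  have "(\<Sum>k<N. card (pj k ` Q)) = card (pj n ` Q) + (\<Sum>k\<in>K. card (pj k ` Q))"
  proof -
    have "{..<N} = insert n K" using nN by (auto simp: K_def N_def)
    then show ?thesis by (simp add: K_def)
  qed
  then show ?thesis using tot cVS cW by (simp add: N_def pj_def)
qed

end



context mtt begin

lemma chunk:
  assumes ab: "a \<le> b" "b \<le> length prog" and rk: "iorank b \<le> iorank a + M"
  shows "real (card (Qs a b)) \<le> (3 * real M) powr (1 - 1 / real (length dims)) * (3 * real M) / real (length dims)"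
proof -
  define N where "N = length dims"
  define Q where "Q = Qs a b"
  define x where "x = card (fst ` Q)"
  define S where "S = (\<Sum>k<N. real (card ((\<lambda>q. (fst q ! k, snd q)) ` Q)))"
  have N1: "N \<ge> 1" using N2 by (simp add: N_def)
  have finQ: "finite Q" using finite_pts by (auto simp: Q_def Qs_def)
  have len: "length (fst q) = N" if "q \<in> Q" for q
    using that by (auto simp: Q_def Qs_def pts_def valid_idx_def N_def)
  have cb: "real (card Q) \<le> real x powr (1 - 1 / real N) * S / real N"
    unfolding x_def S_def by (rule comb_bound[OF finQ len N1])
  have cc: "x + (\<Sum>k<N. card ((\<lambda>q. (fst q ! k, snd q)) ` Q)) \<le> 3 * M"
    unfolding x_def N_def Q_def by (rule chunk_count[OF ab rk])
  have xS: "real x \<le> 3 * real M" "S \<le> 3 * real M" "0 \<le> S"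
  proof -
    have "real (x + (\<Sum>k<N. card ((\<lambda>q. (fst q ! k, snd q)) ` Q))) \<le> real (3 * M)"
      using cc by (simp only: of_nat_le_iff)
    then have "real x + S \<le> 3 * real M" unfolding S_def of_nat_add of_nat_sum of_nat_mult by simp
    moreover have "0 \<le> S" unfolding S_def by (rule sum_nonneg) simp
    ultimately show "real x \<le> 3 * real M" "S \<le> 3 * real M" "0 \<le> S" by auto
  qed
  have e: "0 \<le> 1 - 1 / real N" using N1 by (simp add: field_simps)
  have "real x powr (1 - 1 / real N) * S \<le> (3 * real M) powr (1 - 1 / real N) * (3 * real M)"
  proof (rule mult_mono)
    show "real x powr (1 - 1 / real N) \<le> (3 * real M) powr (1 - 1 / real N)"
      by (rule powr_mono2) (use e xS in auto)
  qed (use xS in auto)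
  then have "real x powr (1 - 1 / real N) * S / real N \<le> (3 * real M) powr (1 - 1 / real N) * (3 * real M) / real N"
    by (rule divide_right_mono) simp
  then show ?thesis using cb by (simp add: Q_def N_def)
qed

end



context mtt begin

lemma iorank_mono: "j \<le> j' \<Longrightarrow> iorank j \<le> iorank j'"
  unfolding iorank_def by (rule card_mono) auto

lemma iorank_Suc_nonio: "\<not> is_io (prog ! j) \<Longrightarrow> iorank (Suc j) = iorank j"
proof -
  assume "\<not> is_io (prog ! j)"
  then have "{i. i < Suc j \<and> is_io (prog ! i)} = {i. i < j \<and> is_io (prog ! i)}"
    using less_Suc_eq by auto
  then show ?thesis by (simp add: iorank_def)
qed

lemma count_bound:
  assumes M0: "M > 0"
  shows "real (prod_list dims * R) \<le> (real (io_count prog) / real M + 1) *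
           ((3 * real M) powr (1 - 1 / real (length dims)) * (3 * real M) / real (length dims))"
proof -
  define G where "G = (3 * real M) powr (1 - 1 / real (length dims)) * (3 * real M) / real (length dims)"
  define C where "C = io_count prog div M"
  define Qc where "Qc c = {q \<in> pts. iorank (tau q) div M = c}" for c
  have G0: "G \<ge> 0" by (simp add: G_def)
  have cover: "pts \<subseteq> (\<Union>c\<in>{..C}. Qc c)"
  proof
    fix q assume q: "q \<in> pts"
    have "tau q \<le> length prog" using tau[OF q] by simp
    then have "iorank (tau q) \<le> io_count prog" using iorank_mono io_rank by simp
    then have "iorank (tau q) div M \<le> C" unfolding C_def by (rule div_le_mono)
    then show "q \<in> (\<Union>c\<in>{..C}. Qc c)" using q by (auto simp: Qc_def)
  qed
  have each: "real (card (Qc c)) \<le> G" for c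
  proof (cases "Qc c = {}")
    case True then show ?thesis using G0 by simp
  next
    case False
    have finQc: "finite (Qc c)" using finite_pts by (auto simp: Qc_def)
    define a where "a = Min (tau ` Qc c)"
    define m where "m = Max (tau ` Qc c)"
    have fin: "finite (tau ` Qc c)" "tau ` Qc c \<noteq> {}" using finQc False by auto
    obtain qa where qa: "qa \<in> Qc c" "a = tau qa" using Min_in[OF fin] by (auto simp: a_def)
    obtain qm where qm: "qm \<in> Qc c" "m = tau qm" using Max_in[OF fin] by (auto simp: m_def)
    have qapts: "qa \<in> pts" and qmpts: "qm \<in> pts" using qa qm by (auto simp: Qc_def)
    have mL: "m < length prog" using tau[OF qmpts] qm by simp
    have am: "a \<le> m" using fin by (simp add: a_def m_def)
    have nio: "\<not> is_io (prog ! m)" using tau[OF qmpts] qm by simp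
    have rb: "iorank (Suc m) = iorank m" by (rule iorank_Suc_nonio[OF nio])
    have rm: "iorank m div M = c" using qm by (simp add: Qc_def)
    have ra: "iorank a div M = c" using qa by (simp add: Qc_def)
    have "iorank m < (c + 1) * M" using rm M0
      by (metis add.commute div_less_iff_less_mult less_add_one mult.commute)
    moreover have "c * M \<le> iorank a" using ra by (metis div_times_less_eq_dividend mult.commute)
    ultimately have rk: "iorank (Suc m) \<le> iorank a + M" using rb by (simp add: algebra_simps)
    have sub: "Qc c \<subseteq> Qs a (Suc m)"
    proof
      fix q assume q: "q \<in> Qc c"
      have "a \<le> tau q" using fin q by (simp add: a_def)
      moreover have "tau q \<le> m" using fin q by (simp add: m_def)
      ultimately show "q \<in> Qs a (Suc m)" using q by (auto simp: Qs_def Qc_def)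
    qed
    have "card (Qc c) \<le> card (Qs a (Suc m))"
      by (rule card_mono[OF _ sub]) (use finite_pts in \<open>auto simp: Qs_def\<close>)
    moreover have "real (card (Qs a (Suc m))) \<le> G"
      unfolding G_def by (rule chunk) (use am mL rk in auto)
    ultimately show ?thesis by linarith
  qed
  have "card pts \<le> card (\<Union>c\<in>{..C}. Qc c)"
    by (rule card_mono[OF _ cover]) (use finite_pts in \<open>auto simp: Qc_def\<close>)
  also have "\<dots> \<le> (\<Sum>c\<in>{..C}. card (Qc c))" by (rule card_UN_le) simp
  finally have "real (card pts) \<le> (\<Sum>c\<in>{..C}. real (card (Qc c)))"
    by (metis of_nat_le_iff of_nat_sum)
  also have "\<dots> \<le> (\<Sum>c\<in>{..C}. G)" by (rule sum_mono) (rule each)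
  also have "\<dots> = (real C + 1) * G" by simp
  also have "\<dots> \<le> (real (io_count prog) / real M + 1) * G"
  proof -
    have "real C \<le> real (io_count prog) / real M"
      unfolding C_def by (rule of_nat_div_le_of_nat)
    then show ?thesis using G0 by (intro mult_right_mono) auto
  qed
  finally show ?thesis using card_pts by (simp add: G_def)
qed

end

lemma final_algebra:
  fixes P io M N :: real
  assumes M0: "M > 0" and N1: "N \<ge> 1"
    and H: "P \<le> (io / M + 1) * ((3 * M) powr (1 - 1 / N) * (3 * M) / N)"
  shows "io \<ge> 1 / 3 powr (2 - 1 / N) * (N * P) / M powr (1 - 1 / N) - M"
proof -
  define G where "G = (3 * M) powr (1 - 1 / N) * (3 * M) / N"
  have G0: "G > 0" using M0 N1 by (simp add: G_def)
  have H': "P \<le> (io / M + 1) * G" using H by (simp add: G_def)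
  have "P / G \<le> io / M + 1" using H' G0 by (simp add: pos_divide_le_eq)
  then have "M * (P / G) \<le> M * (io / M + 1)" using M0 by (intro mult_left_mono) auto
  also have "\<dots> = io + M" using M0 by (simp add: field_simps)
  finally have A: "M * (P / G) \<le> io + M" .
  have "3 * M powr (1 - 1 / N) * 3 powr (1 - 1 / N) = 3 powr (2 - 1 / N) * M powr (1 - 1 / N)"
  proof -
    have e: "2 - 1 / N = 1 + (1 - 1 / N)" by simp
    have "3 powr (2 - 1 / N) = 3 powr 1 * 3 powr (1 - 1 / N)"
      unfolding e by (rule powr_add)
    then show ?thesis by simp
  qed
  then have "M * (P / G) = 1 / 3 powr (2 - 1 / N) * (N * P) / M powr (1 - 1 / N)"
    using M0 N1 by (simp add: G_def powr_mult field_simps)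
  then show ?thesis using A by simp
qed



theorem theorem1:
  fixes dims :: "nat list" and n R M :: nat and prog :: "instr list"
  assumes "length dims \<ge> 2"
    and "\<forall>k<length dims. dims ! k \<ge> 1"
    and "R \<ge> 1"
    and "n < length dims"
    and "mttkrp_alg dims n R M prog"
  shows "real (io_count prog) \<ge>
           1 / 3 powr (2 - 1 / real (length dims)) *
           (real (length dims) * real (prod_list dims) * real R) /
           real M powr (1 - 1 / real (length dims)) - real M"
proof (cases "M = 0")
  case True
  then show ?thesis by simp
next
  case False
  interpret mtt dims n R M prog
    using assms by unfold_locales auto
  have H: "real (prod_list dims) * real R \<le> (real (io_count prog) / real M + 1) *
           ((3 * real M) powr (1 - 1 / real (length dims)) * (3 * real M) / real (length dims))"
    using count_bound False by simp
  have "real (io_count prog) \<ge> 1 / 3 powr (2 - 1 / real (length dims)) *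
          (real (length dims) * (real (prod_list dims) * real R)) /
          real M powr (1 - 1 / real (length dims)) - real M"
    by (rule final_algebra[OF _ _ H]) (use False assms(1) in auto)
  then show ?thesis by (simp add: mult.assoc)
qed

end
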